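(* Let $\mathcal{X}\subseteq\mathbb{R}^n$, $\mathcal{Y}\subseteq\mathbb{R}^m$ be closed convex sets, $f:\mathcal{X}\to\mathbb{R}$ and $g:\mathcal{Y}\to\mathbb{R}$ convex, and $\boldsymbol{\Phi}:\mathbb{R}^n\to\mathbb{R}^m$ continuously differentiable on an open set containing $\mathcal{X}$ such that $\mathbf{x}\mapsto\langle\mathbf{y},\boldsymbol{\Phi}(\mathbf{x})\rangle$ is convex on $\mathcal{X}$ for every $\mathbf{y}\in\mathcal{Y}$. Let $\mathcal{L}(\mathbf{x},\mathbf{y})=f(\mathbf{x})+\langle\mathbf{y},\boldsymbol{\Phi}(\mathbf{x})\rangle-g(\mathbf{y})$ and let $\Omega^*\subseteq\Omega$ be the (assumed nonempty) set of saddle points of $\mathcal{L}$ on $\mathcal{X}\times\mathcal{Y}$, i.e. of points $\mathbf{w}^*=(\mathbf{x}^*;\mathbf{y}^* )\in\Omega$ with $\mathcal{L}(\mathbf{x}^*,\mathbf{y})\le\mathcal{L}(\mathbf{x}^*,\mathbf{y}^* )\le\mathcal{L}(\mathbf{x},\mathbf{y}^* )$ for all $\mathbf{x}\in\mathcal{X},\mathbf{y}\in\mathcal{Y}$. Fix $\alpha\in[0,1]$, $\mathbf{w}^k=(\mathbf{x}^k;\mathbf{y}^k)\in\Omega$, $r_k>0$, $s_k>0$, and let $\tilde{\mathbf{w}}^k=(\tilde{\mathbf{x}}^k;\tilde{\mathbf{y}}^k)$ be produced by the prediction step $$\tilde{\mathbf{x}}^k\in\arg\min\Big\{\mathcal{L}(\mathbf{x},\mathbf{y}^k)+\tfrac{r_k}{2}\|\mathbf{x}-\mathbf{x}^k\|^2\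 \Big|\ \mathbf{x}\in\mathcal{X}\Big\},$$ $$\tilde{\mathbf{y}}^k\in\arg\max\Big\{\mathcal{L}(\tilde{\mathbf{x}}^k,\mathbf{y})+\alpha\,\mathbf{y}^T\nabla\boldsymbol{\Phi}(\tilde{\mathbf{x}}^k)(\tilde{\mathbf{x}}^k-\mathbf{x}^k)-\tfrac{s_k}{2}\|\mathbf{y}-\mathbf{y}^k\|^2\ \Big|\ \mathbf{y}\in\mathcal{Y}\Big\},$$ and let $\mathbf{Q}_k=\begin{pmatrix} r_k\mathbf{I}_n & -\nabla\boldsymbol{\Phi}(\tilde{\mathbf{x}}^k)^T\\ -\alpha\nabla\boldsymbol{\Phi}(\tilde{\mathbf{x}}^k) & s_k\mathbf{I}_m\end{pmatrix}$. Let $\mathbf{M}_k$ be an invertible $(n+m)\times(n+m)$ matrix such that $\boldsymbol{\Sigma}_k=\mathbf{Q}_k\mathbf{M}_k^{-1}$ is symmetric positive definite and $\mathbf{G}_k=\mathbf{Q}_k^T+\mathbf{Q}_k-\mathbf{M}_k^T\boldsymbol{\Sigma}_k\mathbf{M}_k$ is positive definite, and set $\mathbf{w}^{k+1}=\mathbf{w}^k-\mathbf{M}_k(\mathbf{w}^k-\tilde{\mathbf{w}}^k)$. Then for every $\mathbf{w}^*\in\Omega^*$, $$\|\mathbf{w}^*-\mathbf{w}^{k+1}\|_{\boldsymbol{\Sigma}_k}^2\le\|\mathbf{w}^*-\mathbf{w}^k\|_{\boldsymbol{\Sigma}_k}^2-\|\mathbf{w}^k-\tilde{\mathbf{w}}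^k\|_{\mathbf{G}_k}^2.$$
   Context: $\nabla\boldsymbol{\Phi}(\mathbf{x})$ is the $m\times n$ Jacobian of $\boldsymbol{\Phi}$ (entry $(i,j)$ is $\partial\phi_i/\partial x_j$). $\Omega=\mathcal{X}\times\mathcal{Y}$ and $\mathbf{w}=(\mathbf{x};\mathbf{y})$ denotes the stacked vector. For a symmetric positive (semi)definite matrix $\mathbf{H}$, $\|\mathbf{v}\|_{\mathbf{H}}^2=\mathbf{v}^T\mathbf{H}\mathbf{v}$. *)

theory Defs
  imports "HOL-Analysis.Analysis"
begin

definition jacobian :: "(real^'n \<Rightarrow> real^'m) \<Rightarrow> real^'n \<Rightarrow> real^'n^'m" where
  "jacobian \<Phi> x = matrix (frechet_derivative \<Phi> (at x))"

definition stack :: "real^'n \<Rightarrow> real^'m \<Rightarrow> real^('n + 'm)" where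
  "stack x y = (\<chi> i. case i of Inl a \<Rightarrow> x $ a | Inr b \<Rightarrow> y $ b)"

definition pos_def_mat :: "real^'k^'k \<Rightarrow> bool" where
  "pos_def_mat H \<longleftrightarrow> (\<forall>v. v \<noteq> 0 \<longrightarrow> v \<bullet> (H *v v) > 0)"

definition sym_mat :: "real^'k^'k \<Rightarrow> bool" where
  "sym_mat H \<longleftrightarrow> transpose H = H"

definition hnorm_sq :: "real^'k^'k \<Rightarrow> real^'k \<Rightarrow> real" where
  "hnorm_sq H v = v \<bullet> (H *v v)"

definition lagr :: "(real^'n \<Rightarrow> real) \<Rightarrow> (real^'n \<Rightarrow> real^'m) \<Rightarrow> (real^'m \<Rightarrow> real)
    \<Rightarrow> real^'n \<Rightarrow> real^'m \<Rightarrow> real" where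
  "lagr f \<Phi> g x y = f x + y \<bullet> \<Phi> x - g y"

definition saddle_points :: "(real^'n) set \<Rightarrow> (real^'m) set \<Rightarrow> (real^'n \<Rightarrow> real^'m \<Rightarrow> real)
    \<Rightarrow> (real^('n + 'm)) set" where
  "saddle_points X Y L = {stack xs ys | xs ys. xs \<in> X \<and> ys \<in> Y \<and>
      (\<forall>x\<in>X. \<forall>y\<in>Y. L xs y \<le> L xs ys \<and> L xs ys \<le> L x ys)}"

definition Qmat :: "real \<Rightarrow> real \<Rightarrow> real \<Rightarrow> real^'n^'m \<Rightarrow> real^('n + 'm)^('n + 'm)" where
  "Qmat r s \<alpha> J = (\<chi> i j. case i of
      Inl a \<Rightarrow> (case j of Inl b \<Rightarrow> (if a = b then r else 0) | Inr b \<Rightarrow> - (J $ b $ a))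
    | Inr a \<Rightarrow> (case j of Inl b \<Rightarrow> - \<alpha> * (J $ a $ b) | Inr b \<Rightarrow> (if a = b then s else 0)))"

end

theory Submission
  imports Defs
begin


lemma limA:
  fixes \<phi> :: "real \<Rightarrow> real"
  assumes d: "(\<phi> has_real_derivative d) (at 0)"
    and h: "\<And>t. 0 < t \<Longrightarrow> t < 1 \<Longrightarrow> 0 \<le> a + (\<phi> t - \<phi> 0) / t + b * t"
  shows "0 \<le> a + d"
proof -
  have q: "((\<lambda>h. (\<phi> (0 + h) - \<phi> 0) / h) \<longlongrightarrow> d) (at 0)"
    using d by (simp add: DERIV_def)
  have q2: "((\<lambda>t. (\<phi> t - \<phi> 0) / t) \<longlongrightarrow> d) (at_right 0)"
    using q by (simp add: filterlim_at_split)
  have L: "((\<lambda>t. a + (\<phi> t - \<phi> 0) / t + b * t) \<longlongrightarrow> a + d + b * 0) (at_right 0)"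
    by (intro tendsto_intros q2)
  have ev: "eventually (\<lambda>t. 0 \<le> a + (\<phi> t - \<phi> 0) / t + b * t) (at_right (0::real))"
    unfolding eventually_at_right_field using h by (intro exI[of _ 1]) auto
  have "0 \<le> a + d + b * 0"
    by (rule tendsto_lowerbound[OF L ev]) simp
  then show ?thesis by simp
qed

definition linephi where "linephi (\<Phi>::real^'n \<Rightarrow> real^'m) y x0 v = (\<lambda>t::real. y \<bullet> \<Phi> (x0 + t *\<^sub>R v))"

lemma line_deriv:
  fixes \<Phi> :: "real^'n \<Rightarrow> real^'m"
  assumes "\<Phi> differentiable (at x0)"
  shows "(linephi \<Phi> y x0 v has_real_derivative (y \<bullet> (jacobian \<Phi> x0 *v v))) (at 0)"
proof -
  have D: "(\<Phi> has_derivative (\<lambda>h. jacobian \<Phi> x0 *v h)) (at x0)"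
    using assms jacobian_works[of \<Phi> "at x0"]
    by (simp add: Defs.jacobian_def Cartesian_Euclidean_Space.jacobian_def)
  have l: "((\<lambda>t::real. x0 + t *\<^sub>R v) has_derivative (\<lambda>t. t *\<^sub>R v)) (at 0)"
    by (auto intro!: derivative_eq_intros)
  have D': "(\<Phi> has_derivative (\<lambda>h. jacobian \<Phi> x0 *v h)) (at (x0 + 0 *\<^sub>R v))"
    using D by simp
  have c: "((\<lambda>t. \<Phi> (x0 + t *\<^sub>R v)) has_derivative (\<lambda>t. jacobian \<Phi> x0 *v (t *\<^sub>R v))) (at 0)"
    using diff_chain_at[OF l D'] by (simp add: o_def)
  have c2: "(linephi \<Phi> y x0 v has_derivative (\<lambda>t. y \<bullet> (jacobian \<Phi> x0 *v (t *\<^sub>R v)))) (at 0)"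
    unfolding linephi_def by (rule has_derivative_inner_right[OF c])
  have e: "(\<lambda>t. y \<bullet> (jacobian \<Phi> x0 *v (t *\<^sub>R v))) = (\<lambda>t. t * (y \<bullet> (jacobian \<Phi> x0 *v v)))"
    by (auto simp: matrix_vector_mult_scaleR)
  have e2: "(\<lambda>t. y \<bullet> (jacobian \<Phi> x0 *v (t *\<^sub>R v))) = (*) (y \<bullet> (jacobian \<Phi> x0 *v v))"
    by (rule ext) (simp add: matrix_vector_mult_scaleR)
  show ?thesis unfolding has_field_derivative_def using c2 e2 by simp
qed


lemma sum_UNIV_Plus: "sum h (UNIV :: ('a::finite + 'b::finite) set) = sum (h \<circ> Inl) UNIV + sum (h \<circ> Inr) UNIV"
  by (subst UNIV_Plus_UNIV[symmetric], subst sum.Plus) auto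

lemma stack_inner: "stack a b \<bullet> stack c d = a \<bullet> c + b \<bullet> d"
  unfolding inner_vec_def by (simp add: sum_UNIV_Plus stack_def o_def)

lemma stack_diff: "stack a b - stack c d = stack (a - c) (b - d)"
  by (simp add: vec_eq_iff stack_def split: sum.split)

lemma if_mult_helper: "(if p then r else 0) * (c::real) = (if p then r * c else 0)"
  by simp

lemma Qmat_mv: "Qmat r s \<alpha> J *v stack a b = stack (r *\<^sub>R a - transpose J *v b) (s *\<^sub>R b - \<alpha> *\<^sub>R (J *v a))"
proof -
  have "(Qmat r s \<alpha> J *v stack a b) $ i = stack (r *\<^sub>R a - transpose J *v b) (s *\<^sub>R b - \<alpha> *\<^sub>R (J *v a)) $ i" for i
  proof (cases i)
    case (Inl x)
    then show ?thesis
      by (simp add: matrix_vector_mult_def sum_UNIV_Plus Qmat_def stack_def o_def transpose_def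
          if_mult_helper sum_negf)
  next
    case (Inr x)
    then show ?thesis
      by (simp add: matrix_vector_mult_def sum_UNIV_Plus Qmat_def stack_def o_def transpose_def
          if_mult_helper sum_negf sum_distrib_left mult.assoc)
  qed
  then show ?thesis by (simp add: vec_eq_iff)
qed

lemma inner_transp: "(x::real^'a) \<bullet> (A *v y) = (transpose A *v x) \<bullet> y"
  by (metis dot_lmul_matrix transpose_transpose vector_transpose_matrix)

lemma matrix_inv_left': "invertible M \<Longrightarrow> matrix_inv M ** M = mat 1"
  unfolding invertible_def matrix_inv_def by (rule someI2_ex) auto

theorem theorem1:
  fixes X :: "(real^'n) set" and Y :: "(real^'m) set"
    and f :: "real^'n \<Rightarrow> real" and g :: "real^'m \<Rightarrow> real"
    and \<Phi> :: "real^'n \<Rightarrow> real^'m"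
    and \<alpha> r s :: real
    and xk xt :: "real^'n" and yk yt :: "real^'m"
    and M :: "real^('n + 'm)^('n + 'm)"
    and wstar :: "real^('n + 'm)"
  assumes X: "closed X" "convex X" and Y: "closed Y" "convex Y"
    and f: "convex_on X f" and g: "convex_on Y g"
    and Phi_C1: "\<exists>U. open U \<and> X \<subseteq> U \<and> (\<forall>x\<in>U. \<Phi> differentiable (at x))
                  \<and> continuous_on U (jacobian \<Phi>)"
    and Phi_conv: "\<forall>y\<in>Y. convex_on X (\<lambda>x. y \<bullet> \<Phi> x)"
    and nonempty: "saddle_points X Y (lagr f \<Phi> g) \<noteq> {}"
    and alpha: "0 \<le> \<alpha>" "\<alpha> \<le> 1"
    and wk: "xk \<in> X" "yk \<in> Y"
    and rs: "r > 0" "s > 0"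
    and xt: "xt \<in> X"
      "\<forall>x\<in>X. lagr f \<Phi> g xt yk + r / 2 * (norm (xt - xk))^2
              \<le> lagr f \<Phi> g x yk + r / 2 * (norm (x - xk))^2"
    and yt: "yt \<in> Y"
      "\<forall>y\<in>Y. lagr f \<Phi> g xt y + \<alpha> * (y \<bullet> (jacobian \<Phi> xt *v (xt - xk))) - s / 2 * (norm (y - yk))^2
              \<le> lagr f \<Phi> g xt yt + \<alpha> * (yt \<bullet> (jacobian \<Phi> xt *v (xt - xk))) - s / 2 * (norm (yt - yk))^2"
    and M_inv: "invertible M"
    and Sigma: "sym_mat (Qmat r s \<alpha> (jacobian \<Phi> xt) ** matrix_inv M)"
      "pos_def_mat (Qmat r s \<alpha> (jacobian \<Phi> xt) ** matrix_inv M)"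
    and G: "pos_def_mat (transpose (Qmat r s \<alpha> (jacobian \<Phi> xt)) + Qmat r s \<alpha> (jacobian \<Phi> xt)
              - transpose M ** (Qmat r s \<alpha> (jacobian \<Phi> xt) ** matrix_inv M) ** M)"
    and wstar: "wstar \<in> saddle_points X Y (lagr f \<Phi> g)"
  shows "hnorm_sq (Qmat r s \<alpha> (jacobian \<Phi> xt) ** matrix_inv M)
           (wstar - (stack xk yk - M *v (stack xk yk - stack xt yt)))
         \<le> hnorm_sq (Qmat r s \<alpha> (jacobian \<Phi> xt) ** matrix_inv M) (wstar - stack xk yk)
           - hnorm_sq (transpose (Qmat r s \<alpha> (jacobian \<Phi> xt)) + Qmat r s \<alpha> (jacobian \<Phi> xt)
              - transpose M ** (Qmat r s \<alpha> (jacobian \<Phi> xt) ** matrix_inv M) ** M)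
              (stack xk yk - stack xt yt)"
proof -
  define J where "J = jacobian \<Phi> xt"
  define Q where "Q = Qmat r s \<alpha> J"
  obtain xs ys where ws: "wstar = stack xs ys" and xs: "xs \<in> X" and ys: "ys \<in> Y"
    and sad: "\<forall>x\<in>X. \<forall>y\<in>Y. lagr f \<Phi> g xs y \<le> lagr f \<Phi> g xs ys \<and> lagr f \<Phi> g xs ys \<le> lagr f \<Phi> g x ys"
    using wstar unfolding saddle_points_def by blast
  obtain U where U: "open U" "X \<subseteq> U" "\<forall>x\<in>U. \<Phi> differentiable (at x)"
    using Phi_C1 by blast
  have dif: "\<Phi> differentiable (at xt)" using U xt(1) by blast
  define v where "v = xs - xt"
  define u where "u = ys - yt"
  have zX: "xt + t *\<^sub>R v \<in> X" and zeq: "xt + t *\<^sub>R v = (1 - t) *\<^sub>R xt + t *\<^sub>R xs"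
    if "0 \<le> t" "t \<le> 1" for t
  proof -
    show e: "xt + t *\<^sub>R v = (1 - t) *\<^sub>R xt + t *\<^sub>R xs" by (simp add: v_def algebra_simps)
    show "xt + t *\<^sub>R v \<in> X" unfolding e using X(2) xt(1) xs that
      by (simp add: convexD_alt)
  qed
  have zY: "yt + t *\<^sub>R u \<in> Y" and zeqY: "yt + t *\<^sub>R u = (1 - t) *\<^sub>R yt + t *\<^sub>R ys"
    if "0 \<le> t" "t \<le> 1" for t
  proof -
    show e: "yt + t *\<^sub>R u = (1 - t) *\<^sub>R yt + t *\<^sub>R ys" by (simp add: u_def algebra_simps)
    show "yt + t *\<^sub>R u \<in> Y" unfolding e using Y(2) yt(1) ys that
      by (simp add: convexD_alt)
  qed
  have nexp: "(norm (p + t *\<^sub>R q))\<^sup>2 = (norm p)\<^sup>2 + 2 * t * (q \<bullet> p) + t\<^sup>2 * (q \<bullet> q)"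
    for p q :: "real^'k" and t :: real
    unfolding power2_norm_eq_inner
    by (simp add: inner_add_left inner_add_right inner_commute power2_eq_square algebra_simps)
  have X1: "0 \<le> (f xs - f xt + r * (v \<bullet> (xt - xk))) + yk \<bullet> (J *v v)"
  proof (rule limA[OF line_deriv[OF dif, of yk v, folded J_def]])
    fix t :: real assume t: "0 < t" "t < 1"
    let ?z = "xt + t *\<^sub>R v"
    have "lagr f \<Phi> g xt yk + r / 2 * (norm (xt - xk))^2 \<le> lagr f \<Phi> g ?z yk + r / 2 * (norm (?z - xk))^2"
      using xt(2) zX[of t] t by auto
    moreover have "f ?z \<le> (1 - t) * f xt + t * f xs"
      using t convex_onD[OF f, of t xt xs] xt(1) xs zeq[of t] by auto
    moreover have "(norm (?z - xk))\<^sup>2 = (norm (xt - xk))\<^sup>2 + 2 * t * (v \<bullet> (xt - xk)) + t\<^sup>2 * (v \<bullet> v)"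
      using nexp[of "xt - xk" t v] by (simp add: algebra_simps)
    ultimately have "0 \<le> t * (f xs - f xt + r * (v \<bullet> (xt - xk))) + (linephi \<Phi> yk xt v t - linephi \<Phi> yk xt v 0)
        + r / 2 * (v \<bullet> v) * t\<^sup>2"
      unfolding lagr_def linephi_def by (simp add: algebra_simps)
    also have "\<dots> = t * ((f xs - f xt + r * (v \<bullet> (xt - xk))) + (linephi \<Phi> yk xt v t - linephi \<Phi> yk xt v 0) / t
        + r / 2 * (v \<bullet> v) * t)"
      using t by (simp add: field_simps power2_eq_square)
    finally show "0 \<le> (f xs - f xt + r * (v \<bullet> (xt - xk))) + (linephi \<Phi> yk xt v t - linephi \<Phi> yk xt v 0) / t
        + r / 2 * (v \<bullet> v) * t"
      using t by (simp add: zero_le_mult_iff)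
  qed
  have C: "0 \<le> (yt \<bullet> \<Phi> xs - yt \<bullet> \<Phi> xt) + - (yt \<bullet> (J *v v))"
  proof (rule limA[where \<phi> = "\<lambda>t. - linephi \<Phi> yt xt v t" and b = 0])
    show "((\<lambda>t. - linephi \<Phi> yt xt v t) has_real_derivative - (yt \<bullet> (J *v v))) (at 0)"
      using DERIV_minus[OF line_deriv[OF dif, of yt v]] by (simp add: J_def)
    fix t :: real assume t: "0 < t" "t < 1"
    have cv: "convex_on X (\<lambda>x. yt \<bullet> \<Phi> x)" using Phi_conv yt(1) by blast
    have "yt \<bullet> \<Phi> (xt + t *\<^sub>R v) \<le> (1 - t) * (yt \<bullet> \<Phi> xt) + t * (yt \<bullet> \<Phi> xs)"
      using t convex_onD[OF cv, of t xt xs] xt(1) xs zeq[of t] by auto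
    then have k: "- (t * (yt \<bullet> \<Phi> xs - yt \<bullet> \<Phi> xt)) \<le> (- linephi \<Phi> yt xt v t - - linephi \<Phi> yt xt v 0)"
      unfolding linephi_def by (simp add: algebra_simps)
    have "- (yt \<bullet> \<Phi> xs - yt \<bullet> \<Phi> xt) \<le> (- linephi \<Phi> yt xt v t - - linephi \<Phi> yt xt v 0) / t"
      using k t by (simp add: le_divide_eq algebra_simps)
    then show "0 \<le> (yt \<bullet> \<Phi> xs - yt \<bullet> \<Phi> xt) + (- linephi \<Phi> yt xt v t - - linephi \<Phi> yt xt v 0) / t + 0 * t"
      using t by (simp add: zero_le_mult_iff)
  qed
  define c where "c = g ys - g yt - u \<bullet> \<Phi> xt - \<alpha> * (u \<bullet> (J *v (xt - xk))) + s * (u \<bullet> (yt - yk))"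
  have Y1: "0 \<le> c + 0"
  proof (rule limA[where \<phi> = "\<lambda>_. 0" and b = "s / 2 * (u \<bullet> u)"])
    show "((\<lambda>_. 0) has_real_derivative 0) (at 0)" by simp
    fix t :: real assume t: "0 < t" "t < 1"
    let ?z = "yt + t *\<^sub>R u"
    have "lagr f \<Phi> g xt ?z + \<alpha> * (?z \<bullet> (J *v (xt - xk))) - s / 2 * (norm (?z - yk))^2
        \<le> lagr f \<Phi> g xt yt + \<alpha> * (yt \<bullet> (J *v (xt - xk))) - s / 2 * (norm (yt - yk))^2"
      using yt(2) zY[of t] t unfolding J_def by auto
    moreover have "g ?z \<le> (1 - t) * g yt + t * g ys"
      using t convex_onD[OF g, of t yt ys] yt(1) ys zeqY[of t] by auto
    moreover have "(norm (?z - yk))\<^sup>2 = (norm (yt - yk))\<^sup>2 + 2 * t * (u \<bullet> (yt - yk)) + t\<^sup>2 * (u \<bullet> u)"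
      using nexp[of "yt - yk" t u] by (simp add: algebra_simps)
    ultimately have "0 \<le> t * c + s / 2 * (u \<bullet> u) * t\<^sup>2"
      unfolding lagr_def c_def by (simp add: algebra_simps inner_add_left)
    also have "\<dots> = t * (c + (0 - 0) / t + s / 2 * (u \<bullet> u) * t)"
      using t by (simp add: field_simps power2_eq_square)
    finally show "0 \<le> c + (0 - 0) / t + s / 2 * (u \<bullet> u) * t"
      using t by (simp add: zero_le_mult_iff)
  qed
  have S1: "lagr f \<Phi> g xs yt \<le> lagr f \<Phi> g xs ys" and S2: "lagr f \<Phi> g xs ys \<le> lagr f \<Phi> g xt ys"
    using sad xt(1) yt(1) by auto
  define dx where "dx = xk - xt"
  define dy where "dy = yk - yt"
  have tr: "v \<bullet> (transpose J *v dy) = dy \<bullet> (J *v v)"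
    by (metis dot_lmul_matrix inner_commute vector_transpose_matrix transpose_transpose)
  have tr2: "v \<bullet> (dy v* J) = dy \<bullet> (J *v v)"
    by (metis dot_lmul_matrix inner_commute)
  have core: "(wstar - stack xt yt) \<bullet> (Q *v (stack xk yk - stack xt yt)) \<le> 0"
  proof -
    have "(wstar - stack xt yt) \<bullet> (Q *v (stack xk yk - stack xt yt))
        = r * (v \<bullet> dx) - dy \<bullet> (J *v v) + s * (u \<bullet> dy) - \<alpha> * (u \<bullet> (J *v dx))"
      unfolding ws Q_def stack_diff Qmat_mv stack_inner
      by (simp add: v_def[symmetric] u_def[symmetric] dx_def[symmetric] dy_def[symmetric]
          inner_diff_right tr tr2)
    moreover have "J *v (xt - xk) = - (J *v dx)" unfolding dx_def
      by (simp add: matrix_vector_mult_diff_distrib)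
    moreover have "xt - xk = - dx" "yt - yk = - dy" by (simp_all add: dx_def dy_def)
    moreover have "dy \<bullet> (J *v v) = yk \<bullet> (J *v v) - yt \<bullet> (J *v v)" by (simp add: dy_def inner_diff_left)
    moreover have "u \<bullet> \<Phi> xt = ys \<bullet> \<Phi> xt - yt \<bullet> \<Phi> xt" by (simp add: u_def inner_diff_left)
    ultimately show ?thesis
      using X1 C Y1 S1 S2 unfolding c_def lagr_def by simp
  qed
  define Sg where "Sg = Q ** matrix_inv M"
  define wk where "wk = stack xk yk"
  define d where "d = stack xk yk - stack xt yt"
  define a where "a = wstar - wk"
  have SM: "Sg ** M = Q" unfolding Sg_def
    by (simp add: matrix_mul_assoc[symmetric] matrix_inv_left'[OF M_inv])
  have symS: "transpose Sg = Sg" using Sigma(1) unfolding sym_mat_def Sg_def Q_def J_def .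
  have e1: "wstar - (wk - M *v d) = a + M *v d" by (simp add: a_def)
  have h1: "hnorm_sq Sg (a + M *v d) = a \<bullet> (Sg *v a) + 2 * (a \<bullet> (Q *v d)) + d \<bullet> ((transpose M ** Sg ** M) *v d)"
  proof -
    have "(M *v d) \<bullet> (Sg *v a) = a \<bullet> (Q *v d)"
      by (simp add: inner_transp symS matrix_vector_mul_assoc SM inner_commute)
    moreover have "(M *v d) \<bullet> (Sg *v (M *v d)) = d \<bullet> ((transpose M ** Sg ** M) *v d)"
    proof -
      have "(M *v d) \<bullet> (Sg *v (M *v d)) = d \<bullet> (transpose M *v (Sg *v (M *v d)))"
        using inner_transp[of d "transpose M" "Sg *v (M *v d)"] by simp
      then show ?thesis by (simp add: matrix_vector_mul_assoc matrix_mul_assoc)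
    qed
    moreover have "a \<bullet> (Sg *v (M *v d)) = a \<bullet> (Q *v d)"
      by (simp add: matrix_vector_mul_assoc SM)
    ultimately show ?thesis unfolding hnorm_sq_def
      by (simp add: inner_add_left inner_add_right matrix_vector_right_distrib)
  qed
  have h2: "hnorm_sq (transpose Q + Q - transpose M ** Sg ** M) d
      = 2 * (d \<bullet> (Q *v d)) - d \<bullet> ((transpose M ** Sg ** M) *v d)"
  proof -
    have "d \<bullet> (transpose Q *v d) = d \<bullet> (Q *v d)"
      by (simp add: inner_transp inner_commute)
    then show ?thesis unfolding hnorm_sq_def
      by (simp add: matrix_vector_mult_diff_rdistrib matrix_vector_mult_add_rdistrib inner_diff_right inner_add_right)
  qed
  have "wstar - stack xt yt = a + d" by (simp add: a_def d_def wk_def)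
  then have core': "a \<bullet> (Q *v d) + d \<bullet> (Q *v d) \<le> 0"
  proof -
    have "(a + d) \<bullet> (Q *v d) \<le> 0"
      using core unfolding d_def[symmetric] \<open>wstar - stack xt yt = a + d\<close> .
    then show ?thesis by (simp only: inner_add_left)
  qed
  have ha: "hnorm_sq Sg (wstar - wk) = a \<bullet> (Sg *v a)" by (simp add: hnorm_sq_def a_def)
  have goal': "hnorm_sq Sg (wstar - (wk - M *v d)) \<le> hnorm_sq Sg (wstar - wk)
      - hnorm_sq (transpose Q + Q - transpose M ** Sg ** M) d"
    unfolding e1 ha h1 h2 using core' by linarith
  then show ?thesis unfolding Sg_def Q_def J_def wk_def d_def .
qed

end
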